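(* For all integers $k\ge2$ and $n\ge2$ and all valuations $v$, we have $b^e(v,P^{n+k-1,1})>b^e(v,P^{n,k})$.
   Context: Let $F$ be a continuous, atomless cumulative distribution function of valuations on the nonnegative reals. For an integer $m\ge2$ define $b^e(v,m)=v-F(v)^{-(m-1)}\int_0^vF(u)^{m-1}du$. For a probability distribution $P=(p_j)_{j\ge0}$ on the number of agents define $b^e(v,P)=\sum_{j\ge2}p_jb^e(v,j)$. Write $P_{x\ge i}=\sum_{x\ge i}p_x$. Write $P<P'$ iff there exists $l$ such that $P_{x\ge i}=P'_{x\ge i}$ for all $i<l$ and $P_{x\ge i}<P'_{x\ge i}$ for all $i\ge l$. Standing assumption: whenever $P<P'$, we have $b^e(v,P)<b^e(v,P')$ for all $v$. Let $\gamma_A$ be a probability distribution on $\{1,\dots,\kappa\}$, for a fixed integer $\kappa\ge2$, with $\gamma_A(1)<1$. For $n\ge2$ and $k\ge1$, $P^{n,k}$ denotes the distribution of $k+X_1+\dots+X_{n-1}$, where the $X_j$ are i.i.d. with distribution $\gamma_A$. *)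

theory Defs
  imports "HOL-Probability.Probability"
begin

definition be :: "(real \<Rightarrow> real) \<Rightarrow> real \<Rightarrow> nat \<Rightarrow> real" where
  "be F v m = v - integral {0..v} (\<lambda>u. F u ^ (m - 1)) / F v ^ (m - 1)"

definition beP :: "(real \<Rightarrow> real) \<Rightarrow> real \<Rightarrow> nat pmf \<Rightarrow> real" where
  "beP F v P = (\<Sum>\<^sub>\<infinity>j\<in>{2..}. pmf P j * be F v j)"

definition tail :: "nat pmf \<Rightarrow> nat \<Rightarrow> real" where
  "tail P i = measure_pmf.prob P {i..}"

definition dist_less :: "nat pmf \<Rightarrow> nat pmf \<Rightarrow> bool" where
  "dist_less P P' \<longleftrightarrow> (\<exists>l. (\<forall>i<l. tail P i = tail P' i) \<and> (\<forall>i\<ge>l. tail P i < tail P' i))"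

fun sum_iid :: "nat pmf \<Rightarrow> nat \<Rightarrow> nat pmf" where
  "sum_iid \<gamma> 0 = return_pmf 0"
| "sum_iid \<gamma> (Suc m) = map_pmf (\<lambda>(a, b). a + b) (pair_pmf (sum_iid \<gamma> m) \<gamma>)"

definition Pnk :: "nat pmf \<Rightarrow> nat \<Rightarrow> nat \<Rightarrow> nat pmf" where
  "Pnk \<gamma> n k = map_pmf (\<lambda>s. k + s) (sum_iid \<gamma> (n - 1))"

end

theory Submission imports Defs begin

lemma F_zero:
  fixes F :: "real \<Rightarrow> real"
  assumes F_cont: "continuous_on UNIV F" and F0: "\<And>u. u < 0 \<Longrightarrow> F u = 0"
  shows "F 0 = 0"
proof -
  have "(F \<longlongrightarrow> F 0) (at 0)"
    using F_cont by (simp add: continuous_on_def)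
  then have "(F \<longlongrightarrow> F 0) (at_left 0)"
    by (simp add: filterlim_at_split)
  moreover have "(F \<longlongrightarrow> 0) (at_left (0::real))"
  proof (rule tendsto_eventually)
    show "\<forall>\<^sub>F x in at_left (0::real). F x = 0"
      by (auto simp: eventually_at_filter F0)
  qed
  ultimately show ?thesis using tendsto_unique trivial_limit_at_left_real by blast
qed

lemma be_strict:
  fixes F :: "real \<Rightarrow> real"
  assumes F_mono: "mono F" and F_cont: "continuous_on UNIV F"
    and F0: "\<And>u. u < 0 \<Longrightarrow> F u = 0" and v: "F v > 0"
  shows "be F v (Suc p) < be F v (Suc (Suc p))"
proof -
  have Fz: "F 0 = 0" using F_zero F_cont F0 by blast
  have vpos: "v > 0"
  proof (rule ccontr)
    assume "\<not> v > 0"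
    then have "F v \<le> F 0" using F_mono by (auto simp: mono_def)
    then show False using v Fz by simp
  qed
  have Fnn: "F u \<ge> 0" for u
  proof (cases "u < 0")
    case True then show ?thesis using F0 by simp
  next
    case False then have "F 0 \<le> F u" using F_mono by (auto simp: mono_def)
    then show ?thesis using Fz by simp
  qed
  have contI: "continuous_on {0..v} F" using F_cont continuous_on_subset by blast
  obtain u0 where u0: "0 \<le> u0" "u0 \<le> v" "F u0 = F v / 2"
    using IVT'[of F 0 "F v / 2" v] Fz v vpos contI by auto
  define h where "h u = F u ^ p * (F v - F u)" for u
  have hcont: "continuous_on {0..v} h" unfolding h_def
    by (intro continuous_intros contI)
  have hnn: "h u \<ge> 0" if "u \<in> {0..v}" for u
  proof -
    have "F u \<le> F v" using that F_mono by (auto simp: mono_def)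
    then show ?thesis unfolding h_def using Fnn by simp
  qed
  have hu0: "h u0 > 0" unfolding h_def using u0 v by simp
  have "integral {0..v} h \<noteq> 0"
    using integral_eq_0_iff[OF hcont vpos] hnn hu0 u0 by force
  moreover have "integral {0..v} h \<ge> 0"
    using hnn by (intro integral_nonneg hcont[THEN integrable_continuous_interval]) auto
  ultimately have hpos: "integral {0..v} h > 0" by simp
  define I where "I q = integral {0..v} (\<lambda>u. F u ^ q)" for q
  have intq: "(\<lambda>u. F u ^ q) integrable_on {0..v}" for q
    by (intro integrable_continuous_interval continuous_intros contI)
  have "integral {0..v} h = F v * I p - I (Suc p)"
  proof -
    have "integral {0..v} h = integral {0..v} (\<lambda>u. F v * F u ^ p - F u ^ Suc p)"
      unfolding h_def by (simp add: algebra_simps)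
    also have "\<dots> = F v * I p - I (Suc p)"
      unfolding I_def
      by (subst integral_diff) (auto intro!: integrable_continuous_interval continuous_intros contI)
    finally show ?thesis .
  qed
  with hpos have key: "I (Suc p) < F v * I p" by simp
  have "I (Suc p) / F v ^ Suc p < I p / F v ^ p"
    using key v by (simp add: divide_simps mult.commute)
  then show ?thesis unfolding be_def I_def by simp
qed

lemma fin_sum_iid: "finite (set_pmf \<gamma>) \<Longrightarrow> finite (set_pmf (sum_iid \<gamma> m))"
  by (induction m) auto

lemma E_sum:
  fixes f :: "nat \<Rightarrow> real"
  assumes "finite (set_pmf M)"
  shows "measure_pmf.expectation M f = (\<Sum>a\<in>set_pmf M. pmf M a * f a)"
  using assms by (subst integral_measure_pmf[of "set_pmf M"]) auto

lemma E_pair: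
  fixes h :: "nat \<times> nat \<Rightarrow> real"
  assumes A: "finite (set_pmf A)" and B: "finite (set_pmf B)"
  shows "measure_pmf.expectation (pair_pmf A B) h =
    measure_pmf.expectation A (\<lambda>a. measure_pmf.expectation B (\<lambda>b. h (a, b)))"
proof -
  have "measure_pmf.expectation (pair_pmf A B) h =
     (\<Sum>a\<in>set_pmf A. pmf A a *\<^sub>R measure_pmf.expectation (B \<bind> (\<lambda>y. return_pmf (a, y))) h)"
    unfolding pair_pmf_def using A B by (intro pmf_expectation_bind) auto
  also have "\<dots> = (\<Sum>a\<in>set_pmf A. pmf A a * measure_pmf.expectation B (\<lambda>b. h (a, b)))"
  proof (intro sum.cong refl)
    fix a assume "a \<in> set_pmf A"
    have "measure_pmf.expectation (B \<bind> (\<lambda>y. return_pmf (a, y))) h =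
      (\<Sum>b\<in>set_pmf B. pmf B b *\<^sub>R measure_pmf.expectation (return_pmf (a, b)) h)"
      using B by (intro pmf_expectation_bind) auto
    also have "\<dots> = measure_pmf.expectation B (\<lambda>b. h (a, b))"
      using B by (subst integral_measure_pmf[of "set_pmf B"]) auto
    finally show "pmf A a *\<^sub>R measure_pmf.expectation (B \<bind> (\<lambda>y. return_pmf (a, y))) h
       = pmf A a * measure_pmf.expectation B (\<lambda>b. h (a, b))" by simp
  qed
  also have "\<dots> = measure_pmf.expectation A (\<lambda>a. measure_pmf.expectation B (\<lambda>b. h (a, b)))"
    using A by (subst integral_measure_pmf[of "set_pmf A"]) auto
  finally show ?thesis .
qed

lemma E_Suc:
  fixes f :: "nat \<Rightarrow> real"
  assumes G: "finite (set_pmf \<gamma>)"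
  shows "measure_pmf.expectation (sum_iid \<gamma> (Suc m)) f =
    measure_pmf.expectation (sum_iid \<gamma> m) (\<lambda>s. measure_pmf.expectation \<gamma> (\<lambda>x. f (s + x)))"
  using E_pair[OF fin_sum_iid[OF G, of m] G, where h="\<lambda>(a, b). f (a + b)"]
  by (simp add: case_prod_unfold)

lemma E_mono:
  fixes f g :: "nat \<Rightarrow> real"
  assumes "finite (set_pmf M)" "\<And>s. s \<in> set_pmf M \<Longrightarrow> f s \<le> g s"
  shows "measure_pmf.expectation M f \<le> measure_pmf.expectation M g"
  using assms by (simp add: E_sum sum_mono mult_left_mono)

lemma E_strict:
  fixes f g :: "nat \<Rightarrow> real"
  assumes "finite (set_pmf M)" "\<And>s. s \<in> set_pmf M \<Longrightarrow> f s \<le> g s"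
    and "z \<in> set_pmf M" "f z < g z"
  shows "measure_pmf.expectation M f < measure_pmf.expectation M g"
  unfolding E_sum[OF assms(1)]
  using assms by (intro sum_strict_mono_ex1) (auto intro: mult_left_mono simp: pmf_positive)

lemma E_const:
  assumes "finite (set_pmf M)"
  shows "measure_pmf.expectation M (\<lambda>_. c::real) = c"
  by simp

lemma cmp_weak:
  fixes f :: "nat \<Rightarrow> real"
  assumes G: "finite (set_pmf \<gamma>)" and G1: "set_pmf \<gamma> \<subseteq> {1..}"
    and fm: "\<And>a b. a \<le> b \<Longrightarrow> f a \<le> f b"
  shows "measure_pmf.expectation (sum_iid \<gamma> m) (\<lambda>s. f (s + j)) \<le>
         measure_pmf.expectation (sum_iid \<gamma> (m + j)) f"
  using fm
proof (induction j arbitrary: f)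
  case 0 then show ?case by simp
next
  case (Suc j)
  define f' where "f' s = measure_pmf.expectation \<gamma> (\<lambda>x. f (s + x))" for s
  have f'm: "f' a \<le> f' b" if "a \<le> b" for a b
    unfolding f'_def using that Suc.prems by (intro E_mono G) auto
  have "measure_pmf.expectation (sum_iid \<gamma> m) (\<lambda>s. f (s + Suc j)) \<le>
        measure_pmf.expectation (sum_iid \<gamma> m) (\<lambda>s. f' (s + j))"
  proof (intro E_mono fin_sum_iid G)
    fix s
    have "f (s + Suc j) = measure_pmf.expectation \<gamma> (\<lambda>_. f (s + Suc j))" by simp
    also have "\<dots> \<le> f' (s + j)" unfolding f'_def
      using G1 by (intro E_mono G Suc.prems) auto
    finally show "f (s + Suc j) \<le> f' (s + j)" .
  qed
  also have "\<dots> \<le> measure_pmf.expectation (sum_iid \<gamma> (m + j)) f'"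
    using Suc.IH f'm by blast
  also have "\<dots> = measure_pmf.expectation (sum_iid \<gamma> (m + Suc j)) f"
    unfolding f'_def using E_Suc[OF G, of "m + j" f] by simp
  finally show ?case .
qed

lemma cmp_strict:
  fixes f :: "nat \<Rightarrow> real"
  assumes G: "finite (set_pmf \<gamma>)" and G1: "set_pmf \<gamma> \<subseteq> {1..}"
    and x0: "x0 \<in> set_pmf \<gamma>" "x0 \<ge> 2"
    and fs: "\<And>a b. a < b \<Longrightarrow> f a < f b"
  shows "measure_pmf.expectation (sum_iid \<gamma> m) (\<lambda>s. f (s + Suc j)) <
         measure_pmf.expectation (sum_iid \<gamma> (m + Suc j)) f"
proof -
  have fm: "f a \<le> f b" if "a \<le> b" for a b
    using fs that by (cases "a = b") (auto simp: less_imp_le)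
  define f' where "f' s = measure_pmf.expectation \<gamma> (\<lambda>x. f (s + x))" for s
  have f'm: "f' a \<le> f' b" if "a \<le> b" for a b
    unfolding f'_def using that fm by (intro E_mono G) auto
  obtain s0 where s0: "s0 \<in> set_pmf (sum_iid \<gamma> m)"
    using set_pmf_not_empty[of "sum_iid \<gamma> m"] by blast
  have pt: "f (s + Suc j) < f' (s + j)" for s
  proof -
    have "f (s + Suc j) = measure_pmf.expectation \<gamma> (\<lambda>_. f (s + Suc j))" by simp
    also have "\<dots> < f' (s + j)" unfolding f'_def
      using G1 x0 by (intro E_strict[where z=x0] G fm fs) auto
    finally show ?thesis .
  qed
  have "measure_pmf.expectation (sum_iid \<gamma> m) (\<lambda>s. f (s + Suc j)) <
        measure_pmf.expectation (sum_iid \<gamma> m) (\<lambda>s. f' (s + j))"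
    using pt s0 by (intro E_strict[where z=s0] fin_sum_iid G less_imp_le) auto
  also have "\<dots> \<le> measure_pmf.expectation (sum_iid \<gamma> (m + j)) f'"
    using cmp_weak[OF G G1] f'm by blast
  also have "\<dots> = measure_pmf.expectation (sum_iid \<gamma> (m + Suc j)) f"
    unfolding f'_def using E_Suc[OF G, of "m + j" f] by simp
  finally show ?thesis .
qed

lemma beP_E:
  assumes "finite (set_pmf P)" "be F v 0 = 0" "be F v 1 = 0"
  shows "beP F v P = measure_pmf.expectation P (be F v)"
proof -
  have "beP F v P = infsum (\<lambda>j. pmf P j * be F v j) (set_pmf P)"
    unfolding beP_def
  proof (rule infsum_cong_neutral)
    fix x assume "x \<in> set_pmf P - {2..}"
    then have "x = 0 \<or> x = 1" by auto
    then show "pmf P x * be F v x = 0" using assms by auto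
  qed (auto simp: set_pmf_eq)
  also have "\<dots> = (\<Sum>j\<in>set_pmf P. pmf P j * be F v j)"
    using assms(1) by simp
  finally show ?thesis using E_sum[OF assms(1)] by simp
qed

theorem lemma2:
  fixes F :: "real \<Rightarrow> real" and \<gamma> :: "nat pmf" and \<kappa> n k :: nat and v :: real
  assumes F_mono: "mono F"
    and F_cont: "continuous_on UNIV F"
    and F_nonneg_support: "\<And>u. u < 0 \<Longrightarrow> F u = 0"
    and F_le1: "\<And>u. F u \<le> 1"
    and F_lim: "(F \<longlongrightarrow> 1) at_top"
    and standing: "\<And>P P' w. dist_less P P' \<Longrightarrow> F w > 0 \<Longrightarrow> beP F w P < beP F w P'"
    and kappa: "\<kappa> \<ge> 2"
    and gamma_supp: "set_pmf \<gamma> \<subseteq> {1..\<kappa>}"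
    and gamma_1: "pmf \<gamma> 1 < 1"
    and k: "k \<ge> 2" and n: "n \<ge> 2"
    and v: "F v > 0"
  shows "beP F v (Pnk \<gamma> (n + k - 1) 1) > beP F v (Pnk \<gamma> n k)"
proof -
  have G: "finite (set_pmf \<gamma>)" using gamma_supp finite_subset by blast
  have G1: "set_pmf \<gamma> \<subseteq> {1..}" using gamma_supp by auto
  obtain x0 where x0: "x0 \<in> set_pmf \<gamma>" "x0 \<ge> 2"
  proof -
    have "\<not> set_pmf \<gamma> \<subseteq> {1}"
    proof
      assume "set_pmf \<gamma> \<subseteq> {1}"
      then have "\<gamma> = return_pmf 1" by (simp add: set_pmf_subset_singleton)
      then show False using gamma_1 by simp
    qed
    then obtain x where "x \<in> set_pmf \<gamma>" "x \<noteq> 1" by auto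
    moreover then have "x \<ge> 2" using G1 by force
    ultimately show ?thesis using that by blast
  qed
  have Fz: "F 0 = 0" using F_zero F_cont F_nonneg_support by blast
  have vpos: "v > 0"
  proof (rule ccontr)
    assume "\<not> v > 0"
    then have "F v \<le> F 0" using F_mono by (auto simp: mono_def)
    then show False using v Fz by simp
  qed
  have be0: "be F v 0 = 0" and be1: "be F v 1 = 0"
    using vpos by (auto simp: be_def)
  define f where "f s = be F v (Suc s)" for s
  have fs: "f a < f b" if "a < b" for a b
  proof -
    have "\<And>p. f p < f (Suc p)" unfolding f_def
      using be_strict[OF F_mono F_cont F_nonneg_support v] by blast
    then show ?thesis using lift_Suc_mono_less[of f] that by blast
  qed
  have finP: "finite (set_pmf (Pnk \<gamma> n' k'))" for n' k'
    unfolding Pnk_def using fin_sum_iid[OF G] by simp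
  have fk: "(\<lambda>s. f (s + Suc (k - 2))) = (\<lambda>s. be F v (k + s))"
    unfolding f_def using k by (auto intro!: arg_cong[where f="be F v"])
  have "beP F v (Pnk \<gamma> n k) =
      measure_pmf.expectation (sum_iid \<gamma> (n - 1)) (\<lambda>s. f (s + Suc (k - 2)))"
    unfolding beP_E[OF finP be0 be1] unfolding Pnk_def fk by simp
  also have "\<dots> < measure_pmf.expectation (sum_iid \<gamma> (n - 1 + Suc (k - 2))) f"
    by (rule cmp_strict[OF G G1 x0 fs])
  also have "\<dots> = beP F v (Pnk \<gamma> (n + k - 1) 1)"
  proof -
    have idx: "n - 1 + Suc (k - 2) = n + k - 1 - 1" using k n by simp
    show ?thesis unfolding beP_E[OF finP be0 be1] unfolding Pnk_def f_def idx
      by simp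
  qed
  finally show ?thesis .
qed

end
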